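(* Let $V$ be a finite-dimensional complex vector space and $\xi:\mathbb C\to\mathrm{End}(V)$ a rational function with $\xi(\infty)=1$ and $[\xi(u),\xi(v)]=0$ for all $u,v$. Let $\sigma(\xi)\subset\mathbb C$ be the set of poles of $\xi(u)^{\pm1}$ and $\mathsf X(\xi)=\bigcup_{a\in\sigma(\xi)}[0,a]$, where $[0,a]$ is the line segment from $0$ to $a$. Then there is a unique single-valued holomorphic function $t:\mathbb C\setminus\mathsf X(\xi)\to\mathrm{End}(V)$ (holomorphic also at $u=\infty$) such that $\exp(t(u))=\xi(u)$ and $t(\infty)=0$. Moreover $[t(u),t(v)]=0$ for all $u,v$, and $t'(u)=\xi(u)^{-1}\xi'(u)$. *)

theory Defs
  imports "HOL-Complex_Analysis.Complex_Analysis" "HOL-Computational_Algebra.Polynomial"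
begin

text \<open>End(V) for V = complex^'n is modelled by complex matrices complex^'n^'n
  (matrix product **, identity mat 1, inverse matrix_inv).\<close>

definition mpow :: "complex^'n^'n \<Rightarrow> nat \<Rightarrow> complex^'n^'n" where
  "mpow A k = (((**) A) ^^ k) (mat 1)"

text \<open>Matrix exponential (the vec type's exp would be entrywise, so we define it).\<close>
definition mexp :: "complex^'n^'n \<Rightarrow> complex^'n^'n" where
  "mexp A = (\<Sum>k. (1 / fact k) *\<^sub>R mpow A k)"

definition rational_mfun :: "(complex \<Rightarrow> complex^'n^'n) \<Rightarrow> bool" where
  "rational_mfun f \<longleftrightarrow>
     (\<exists>(P :: complex poly^'n^'n) q. q \<noteq> 0 \<and>
        (\<forall>u. poly q u \<noteq> 0 \<longrightarrow> f u = (\<chi> i j. poly (P$i$j) u / poly q u))) \<and>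
     (\<forall>u. \<not> is_pole f u \<longrightarrow> isCont f u)"

definition pole_set :: "(complex \<Rightarrow> complex^'n^'n) \<Rightarrow> complex set" where
  "pole_set f = {a. is_pole f a \<or> is_pole (\<lambda>u. matrix_inv (f u)) a}"

definition cutX :: "(complex \<Rightarrow> complex^'n^'n) \<Rightarrow> complex set" where
  "cutX f = (\<Union>a\<in>pole_set f. closed_segment 0 a)"

definition mholo_on :: "(complex \<Rightarrow> complex^'n^'n) \<Rightarrow> complex set \<Rightarrow> bool" where
  "mholo_on f S \<longleftrightarrow> (\<forall>i j. (\<lambda>u. f u $ i $ j) holomorphic_on S)"

definition mderiv :: "(complex \<Rightarrow> complex^'n^'n) \<Rightarrow> complex \<Rightarrow> complex^'n^'n" where
  "mderiv f u = (\<chi> i j. deriv (\<lambda>v. f v $ i $ j) u)"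

text \<open>f is holomorphic at infinity with value 0 there: w \<mapsto> f(1/w), extended by 0 at w = 0,
  is holomorphic near 0.\<close>
definition holo_at_inf_zero :: "(complex \<Rightarrow> complex^'n^'n) \<Rightarrow> bool" where
  "holo_at_inf_zero f \<longleftrightarrow>
     (\<exists>r>0. mholo_on (\<lambda>w. if w = 0 then 0 else f (inverse w)) (ball 0 r))"

end

theory Submission
  imports Defs
begin


no_notation fps_nth (infixl "$" 75)

lemma cvec_norm_mult: "norm (\<chi> i. c * (x::complex^'n) $ i) = cmod c * norm x"
  by (simp add: norm_vec_def norm_mult L2_set_right_distrib)

lemma cscaleR: "r *\<^sub>R (z::complex) = of_real r * z"
  by (simp add: scaleR_conv_of_real)

lemma norm_axis_c: "norm (axis j (1::complex)) = 1"
proof -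
  have "\<And>i. (norm (axis j (1::complex) $ i))\<^sup>2 = (if i = j then 1 else 0)"
    by (auto simp: axis_def)
  then show ?thesis by (simp add: norm_vec_def L2_set_def)
qed

lemma matrix_add_rdistrib': "((B + C) ** A) = (B ** A) + (C ** A)"
  by (vector matrix_matrix_mult_def sum.distrib[symmetric] field_simps)

lemma mvm_linear: "linear (\<lambda>v::complex^'n. (A::complex^'n^'m) *v v)"
  by (rule linearI) (auto simp: vec_eq_iff matrix_vector_mult_def sum.distrib algebra_simps
       sum_distrib_left cscaleR)

lemma mvm_bl: "bounded_linear (\<lambda>v::complex^'n. (A::complex^'n^'m) *v v)"
  using mvm_linear linear_conv_bounded_linear by blast

lemma cmod_entry_le_onorm: "cmod ((A::complex^'n^'m) $ i $ j) \<le> onorm (\<lambda>v. A *v v)"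
proof -
  have "(A *v axis j 1) $ i = A $ i $ j"
    by (simp add: matrix_vector_mult_def axis_def if_distrib cong: if_cong)
  then have "cmod (A $ i $ j) \<le> norm (A *v axis j 1)"
    by (metis Finite_Cartesian_Product.norm_nth_le)
  also have "\<dots> \<le> onorm (\<lambda>v. A *v v) * norm (axis j (1::complex))"
    by (rule onorm[OF mvm_bl])
  finally show ?thesis by (simp add: norm_axis_c)
qed

lemma onorm_le_l1: "onorm (\<lambda>v. (A::complex^'n^'m) *v v) \<le> (\<Sum>i\<in>UNIV. \<Sum>j\<in>UNIV. cmod (A $ i $ j))"
proof (rule onorm_le)
  fix x :: "complex^'n"
  have "norm (A *v x) \<le> (\<Sum>i\<in>UNIV. norm ((A *v x) $ i))"
    by (simp add: norm_vec_def L2_set_le_sum)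
  also have "\<dots> \<le> (\<Sum>i\<in>UNIV. \<Sum>j\<in>UNIV. cmod (A $ i $ j) * norm x)"
  proof (rule sum_mono)
    fix i
    have "cmod ((A *v x) $ i) \<le> (\<Sum>j\<in>UNIV. cmod (A $ i $ j * x $ j))"
      unfolding matrix_vector_mult_def by (simp add: norm_sum)
    also have "\<dots> \<le> (\<Sum>j\<in>UNIV. cmod (A $ i $ j) * norm x)"
      by (rule sum_mono) (simp add: norm_mult Finite_Cartesian_Product.norm_nth_le mult_left_mono)
    finally show "cmod ((A *v x) $ i) \<le> (\<Sum>j\<in>UNIV. cmod (A $ i $ j) * norm x)" .
  qed
  finally show "norm (A *v x) \<le> (\<Sum>i\<in>UNIV. \<Sum>j\<in>UNIV. cmod (A $ i $ j)) * norm x"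
    by (simp add: sum_distrib_right)
qed

lemma frob_le_l1: "norm (A::complex^'n^'m) \<le> (\<Sum>i\<in>UNIV. \<Sum>j\<in>UNIV. cmod (A $ i $ j))"
proof -
  have "norm A \<le> (\<Sum>i\<in>UNIV. norm (A $ i))" by (simp add: norm_vec_def L2_set_le_sum)
  also have "\<dots> \<le> (\<Sum>i\<in>UNIV. \<Sum>j\<in>UNIV. cmod (A $ i $ j))"
    by (rule sum_mono) (simp add: norm_vec_def L2_set_le_sum)
  finally show ?thesis .
qed

lemma cmod_entry_le_frob: "cmod ((A::complex^'n^'m) $ i $ j) \<le> norm A"
  by (meson Finite_Cartesian_Product.norm_nth_le order_trans)

typedef ('n::finite) cm = "UNIV :: (complex^'n^'n) set" morphisms rep abs by auto
setup_lifting type_definition_cm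

instantiation cm :: (finite) real_normed_algebra_1
begin
lift_definition norm_cm :: "'a cm \<Rightarrow> real" is "\<lambda>A. onorm (\<lambda>v. A *v v)" .
lift_definition minus_cm :: "'a cm \<Rightarrow> 'a cm \<Rightarrow> 'a cm" is "(-)" .
lift_definition plus_cm :: "'a cm \<Rightarrow> 'a cm \<Rightarrow> 'a cm" is "(+)" .
lift_definition uminus_cm :: "'a cm \<Rightarrow> 'a cm" is "uminus" .
lift_definition zero_cm :: "'a cm" is "0" .
lift_definition one_cm :: "'a cm" is "mat 1" .
lift_definition times_cm :: "'a cm \<Rightarrow> 'a cm \<Rightarrow> 'a cm" is "(**)" .
lift_definition scaleR_cm :: "real \<Rightarrow> 'a cm \<Rightarrow> 'a cm" is "scaleR" .
definition dist_cm :: "'a cm \<Rightarrow> 'a cm \<Rightarrow> real" where "dist_cm a b = norm (a - b)"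
definition uniformity_cm :: "('a cm \<times> 'a cm) filter" where
  "uniformity_cm = (INF e\<in>{0 <..}. principal {(x, y). dist x y < e})"
definition open_cm :: "'a cm set \<Rightarrow> bool" where
  "open_cm S = (\<forall>x\<in>S. \<forall>\<^sub>F (x', y) in uniformity. x' = x \<longrightarrow> y \<in> S)"
definition sgn_cm :: "'a cm \<Rightarrow> 'a cm" where "sgn_cm x = scaleR (inverse (norm x)) x"

lemma mvm_scaleR: "(r *\<^sub>R (A::complex^'n^'m)) *v v = r *\<^sub>R (A *v v)"
  by (simp add: vec_eq_iff matrix_vector_mult_def cscaleR sum_distrib_left algebra_simps)

lemma mvm_eq_zero: "(\<lambda>v. (A::complex^'n^'m) *v v) = (\<lambda>v. 0) \<longleftrightarrow> A = 0"
proof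
  assume "(\<lambda>v. A *v v) = (\<lambda>v. 0)"
  then have "\<And>j. A *v axis j 1 = 0" by metis
  then show "A = 0"
    by (auto simp: vec_eq_iff matrix_vector_mult_def axis_def if_distrib cong: if_cong)
qed simp

instance
proof
  fix a b c :: "'a cm" and r s :: real
  show "a * b * c = a * (b * c)" by transfer (simp add: matrix_mul_assoc[symmetric])
  show "(a + b) * c = a * c + b * c" by transfer (simp add: matrix_add_rdistrib')
  show "a * (b + c) = a * b + a * c" by transfer (simp add: matrix_add_ldistrib)
  show "1 * a = a" by transfer simp
  show "a * 1 = a" by transfer simp
  show "(0::'a cm) \<noteq> 1" by transfer (auto simp: vec_eq_iff mat_def)
  show "r *\<^sub>R a * b = r *\<^sub>R (a * b)"
    by transfer (simp add: vec_eq_iff matrix_matrix_mult_def cscaleR sum_distrib_left algebra_simps)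
  show "a * r *\<^sub>R b = r *\<^sub>R (a * b)"
    by transfer (simp add: vec_eq_iff matrix_matrix_mult_def cscaleR sum_distrib_left algebra_simps)
  show "a + b + c = a + (b + c)" by transfer simp
  show "a + b = b + a" by transfer simp
  show "0 + a = a" by transfer simp
  show "- a + a = 0" by transfer simp
  show "a - b = a + - b" by transfer simp
  show "r *\<^sub>R (a + b) = r *\<^sub>R a + r *\<^sub>R b" by transfer (simp add: scaleR_right_distrib)
  show "(r + s) *\<^sub>R a = r *\<^sub>R a + s *\<^sub>R a" by transfer (simp add: scaleR_left_distrib)
  show "r *\<^sub>R s *\<^sub>R a = (r * s) *\<^sub>R a" by transfer simp
  show "1 *\<^sub>R a = a" by transfer simp
  show "dist a b = norm (a - b)" by (simp add: dist_cm_def)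
  show "sgn a = inverse (norm a) *\<^sub>R a" by (simp add: sgn_cm_def)
  show "uniformity = (INF e\<in>{0<..}. principal {(x, y). dist (x::'a cm) y < e})" by (simp add: uniformity_cm_def)
  show "open U = (\<forall>x\<in>U. \<forall>\<^sub>F (x', y) in uniformity. x' = x \<longrightarrow> y \<in> U)" for U :: "'a cm set"
    by (simp add: open_cm_def)
  show "(norm a = 0) = (a = 0)"
    by transfer (simp add: onorm_eq_0[OF mvm_bl] mvm_eq_zero[unfolded fun_eq_iff])
  show "norm (a + b) \<le> norm a + norm b"
  proof transfer
    fix a b :: "complex^'a^'a"
    have "(\<lambda>v. (a+b) *v v) = (\<lambda>v. a *v v + b *v v)"
      by (simp add: matrix_vector_mult_add_rdistrib)
    then show "onorm (\<lambda>v. (a+b) *v v) \<le> onorm (\<lambda>v. a *v v) + onorm (\<lambda>v. b *v v)"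
      using onorm_triangle[OF mvm_bl mvm_bl] by simp
  qed
  show "norm (r *\<^sub>R a) = \<bar>r\<bar> * norm a"
  proof transfer
    fix r and a :: "complex^'a^'a"
    have "(\<lambda>v. (r *\<^sub>R a) *v v) = (\<lambda>v. r *\<^sub>R (a *v v))"
      by (simp add: mvm_scaleR)
    then show "onorm (\<lambda>v. (r *\<^sub>R a) *v v) = \<bar>r\<bar> * onorm (\<lambda>v. a *v v)"
      using onorm_scaleR[OF mvm_bl] by simp
  qed
  show "norm (a * b) \<le> norm a * norm b"
  proof transfer
    fix A B :: "complex^'a^'a"
    have "(\<lambda>v. (A ** B) *v v) = (\<lambda>v. A *v v) \<circ> (\<lambda>v. B *v v)"
      by (simp add: o_def matrix_vector_mul_assoc)
    then show "onorm (\<lambda>v. (A ** B) *v v) \<le> onorm (\<lambda>v. A *v v) * onorm (\<lambda>v. B *v v)"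
      using onorm_compose[OF mvm_bl mvm_bl, of A B] by (simp only:)
  qed
  show "norm (1::'a cm) = 1"
    by transfer (simp add: onorm_id)
qed
end






lemma norm_cm_def': "norm x = onorm (\<lambda>v. rep x *v v)"
  by (simp add: norm_cm.rep_eq)

lemma cmod_rep_le: "cmod (rep x $ i $ j) \<le> norm x"
  by (simp add: norm_cm.rep_eq cmod_entry_le_onorm)

lemma l1_le_frob: "(\<Sum>i\<in>UNIV. \<Sum>j\<in>UNIV. cmod ((A::complex^'n^'m) $ i $ j)) \<le> real CARD('m) * real CARD('n) * norm A"
proof -
  have "(\<Sum>i\<in>UNIV. \<Sum>j\<in>UNIV. cmod (A $ i $ j)) \<le> (\<Sum>i\<in>(UNIV::'m set). \<Sum>j\<in>(UNIV::'n set). norm A)"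
    by (intro sum_mono cmod_entry_le_frob)
  also have "\<dots> = real CARD('m) * real CARD('n) * norm A" by simp
  finally show ?thesis .
qed

lemma norm_cm_le_frob: "norm (x::'n::finite cm) \<le> real CARD('n) * real CARD('n) * norm (rep x)"
  unfolding norm_cm.rep_eq using onorm_le_l1[of "rep x"] l1_le_frob[of "rep x"] by linarith

lemma frob_le_norm_cm: "norm (rep (x::'n::finite cm)) \<le> real CARD('n) * real CARD('n) * norm x"
proof -
  have "norm (rep x) \<le> (\<Sum>i\<in>UNIV. \<Sum>j\<in>UNIV. cmod (rep x $ i $ j))" by (rule frob_le_l1)
  also have "\<dots> \<le> (\<Sum>i\<in>(UNIV::'n set). \<Sum>j\<in>(UNIV::'n set). norm x)"
    by (intro sum_mono cmod_rep_le)
  also have "\<dots> = real CARD('n) * real CARD('n) * norm x" by simp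
  finally show ?thesis .
qed

lemma bl_rep: "bounded_linear (rep :: 'n::finite cm \<Rightarrow> _)"
proof
  show "rep (x + y) = rep x + rep y" for x y :: "'n::finite cm" by (simp add: plus_cm.rep_eq)
  show "rep (r *\<^sub>R x) = r *\<^sub>R rep x" for r and x :: "'n::finite cm" by (simp add: scaleR_cm.rep_eq)
  show "\<exists>K. \<forall>x::'n::finite cm. norm (rep x) \<le> norm x * K"
  proof -
    have "norm (rep x) \<le> norm x * (real CARD('n) * real CARD('n))" for x :: "'n::finite cm"
      using frob_le_norm_cm[of x] by (simp add: mult.commute)
    then show ?thesis by blast
  qed
qed

lemma bl_abs: "bounded_linear (abs :: _ \<Rightarrow> 'n::finite cm)"
proof
  show "abs (x + y) = (abs x + abs y :: 'n::finite cm)" for x y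
    by (simp add: plus_cm_def abs_inverse)
  show "abs (r *\<^sub>R x) = (r *\<^sub>R abs x :: 'n::finite cm)" for r x
    by (simp add: scaleR_cm_def abs_inverse)
  show "\<exists>K. \<forall>x. norm (abs x :: 'n::finite cm) \<le> norm x * K"
  proof -
    have "norm (abs x :: 'n::finite cm) \<le> norm x * (real CARD('n) * real CARD('n))" for x
      using norm_cm_le_frob[of "abs x :: 'n::finite cm"] by (simp add: abs_inverse mult.commute)
    then show ?thesis by blast
  qed
qed

lemma tendsto_cm_iff: "(f \<longlongrightarrow> l) F \<longleftrightarrow> ((\<lambda>x. rep (f x)) \<longlongrightarrow> rep l) F"
proof
  assume "(f \<longlongrightarrow> l) F"
  then show "((\<lambda>x. rep (f x)) \<longlongrightarrow> rep l) F" by (rule bounded_linear.tendsto[OF bl_rep])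
next
  assume "((\<lambda>x. rep (f x)) \<longlongrightarrow> rep l) F"
  from bounded_linear.tendsto[OF bl_abs this] show "(f \<longlongrightarrow> l) F" by (simp add: rep_inverse)
qed

lemma tendsto_cm_entries: "(f \<longlongrightarrow> l) F \<longleftrightarrow> (\<forall>i j. ((\<lambda>x. rep (f x) $ i $ j) \<longlongrightarrow> rep l $ i $ j) F)"
  unfolding tendsto_cm_iff
proof
  assume "((\<lambda>x. rep (f x)) \<longlongrightarrow> rep l) F"
  then show "\<forall>i j. ((\<lambda>x. rep (f x) $ i $ j) \<longlongrightarrow> rep l $ i $ j) F"
    by (intro allI tendsto_vec_nth)
next
  assume "\<forall>i j. ((\<lambda>x. rep (f x) $ i $ j) \<longlongrightarrow> rep l $ i $ j) F"
  then show "((\<lambda>x. rep (f x)) \<longlongrightarrow> rep l) F"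
    by (intro vec_tendstoI) simp
qed

instance cm :: (finite) banach
proof
  fix X :: "nat \<Rightarrow> 'a cm"
  assume "Cauchy X"
  then have "Cauchy (\<lambda>n. rep (X n))" by (rule bounded_linear.Cauchy[OF bl_rep])
  then have "convergent (\<lambda>n. rep (X n))" by (rule Cauchy_convergent)
  then obtain L where "(\<lambda>n. rep (X n)) \<longlonglongrightarrow> L" unfolding convergent_def by blast
  then have "X \<longlonglongrightarrow> abs L" unfolding tendsto_cm_iff[of X] by (simp add: abs_inverse)
  then show "convergent X" by (rule convergentI)
qed

lemma rep_power: "rep (x ^ k) = mpow (rep x) k"
  by (induction k) (simp_all add: mpow_def one_cm.rep_eq times_cm.rep_eq)

lemma mexp_rep: "mexp A = rep (exp (abs A :: 'n::finite cm))"
proof -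
  have "rep (exp (abs A :: 'n::finite cm)) = (\<Sum>k. rep ((abs A :: 'n::finite cm) ^ k /\<^sub>R fact k))"
    unfolding exp_def by (rule bounded_linear.suminf[OF bl_rep summable_exp_generic])
  also have "\<dots> = (\<Sum>k. (1 / fact k) *\<^sub>R mpow A k)"
    by (simp add: scaleR_cm.rep_eq rep_power abs_inverse inverse_eq_divide)
  finally show ?thesis by (simp add: mexp_def)
qed

lemma mexp_rep': "mexp (rep x) = rep (exp x)"
  by (simp add: mexp_rep rep_inverse)

lemma mat_mult_entry: "(mat c ** (A::complex^'n^'n)) $ i $ j = c * A $ i $ j"
proof -
  have "(\<Sum>k\<in>UNIV. (if i = k then c else 0) * A$k$j) = (\<Sum>k\<in>UNIV. if i = k then c * A$k$j else 0)" by (rule sum.cong) auto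
  then show ?thesis by (simp add: matrix_matrix_mult_def mat_def)
qed

lemma mult_mat_entry: "((A::complex^'n^'n) ** mat c) $ i $ j = c * A $ i $ j"
proof -
  have "(\<Sum>k\<in>UNIV. A$i$k * (if k = j then c else 0)) = (\<Sum>k\<in>UNIV. if k = j then A$i$k * c else 0)" by (rule sum.cong) auto
  then show ?thesis by (simp add: matrix_matrix_mult_def mat_def mult.commute)
qed

lemma mat_mvm: "mat c *v (v::complex^'n) = (\<chi> i. c * v $ i)"
proof -
  have "\<And>i. (\<Sum>j\<in>UNIV. (if i = j then c else 0) * v$j) = (\<Sum>j\<in>UNIV. if i = j then c * v$j else 0)" by (rule sum.cong) auto
  then show ?thesis by (simp add: vec_eq_iff matrix_vector_mult_def mat_def)
qed

lift_definition ofc :: "complex \<Rightarrow> 'n::finite cm" is "\<lambda>c. mat c" .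

lemma rep_ofc_mult: "rep (ofc c * x) $ i $ j = c * rep x $ i $ j"
  by (simp add: times_cm.rep_eq ofc.rep_eq mat_mult_entry)

lemma rep_mult_ofc: "rep (x * ofc c) $ i $ j = c * rep x $ i $ j"
  by (simp add: times_cm.rep_eq ofc.rep_eq mult_mat_entry)

lemma ofc_central: "ofc c * x = x * ofc c"
  by (simp add: rep_inject[symmetric] vec_eq_iff rep_ofc_mult rep_mult_ofc)

lemma ofc_mult: "ofc (a * b) = ofc a * ofc b"
  by (simp add: rep_inject[symmetric] vec_eq_iff rep_ofc_mult) (simp add: ofc.rep_eq mat_def)

lemma ofc_1[simp]: "ofc 1 = 1" by transfer simp
lemma ofc_0[simp]: "ofc 0 = 0" by transfer simp
lemma ofc_diff: "ofc (a - b) = ofc a - ofc b"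
  by transfer (simp add: vec_eq_iff mat_def)
lemma ofc_minus: "ofc (- a) = - ofc a"
  by transfer (simp add: vec_eq_iff mat_def)

lemma norm_ofc: "norm (ofc c :: 'n::finite cm) = cmod c"
proof -
  have mv: "mat c *v v = (\<chi> i. c * v $ i)" for v :: "complex^'n"
    by (rule mat_mvm)
  have le: "onorm (\<lambda>v::complex^'n. mat c *v v) \<le> cmod c"
    by (rule onorm_le) (simp add: mv cvec_norm_mult)
  obtain j :: 'n where True by simp
  have "norm (mat c *v axis j 1) \<le> onorm (\<lambda>v::complex^'n. mat c *v v) * norm (axis j (1::complex))"
    by (rule onorm[OF mvm_bl])
  then have "cmod c \<le> onorm (\<lambda>v::complex^'n. mat c *v v)"
    by (simp add: mv cvec_norm_mult norm_axis_c)
  with le show ?thesis by (simp add: norm_cm.rep_eq ofc.rep_eq)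
qed



lemma exp_rem_norm:
  fixes x :: "'a::{real_normed_algebra_1,banach}"
  shows "norm (exp x - 1 - x) \<le> exp (norm x) - 1 - norm x"
proof -
  define f where "f = (\<lambda>n. x^n /\<^sub>R fact n)"
  define g where "g = (\<lambda>n. norm x ^ n /\<^sub>R fact n)"
  have "f sums exp x" unfolding f_def by (rule exp_converges)
  then have "(\<lambda>n. f (Suc n)) sums (exp x - f 0)"
    by (simp add: sums_Suc_iff)
  then have "(\<lambda>n. f (Suc (Suc n))) sums (exp x - f 0 - f 1)"
    using sums_Suc_iff[of "\<lambda>n. f (Suc n)" "exp x - f 0 - f 1"] by simp
  then have f2: "(\<lambda>n. f (Suc (Suc n))) sums (exp x - 1 - x)"
    by (simp add: f_def)
  have "g sums exp (norm x)" unfolding g_def by (rule exp_converges)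
  then have "(\<lambda>n. g (Suc n)) sums (exp (norm x) - g 0)"
    by (simp add: sums_Suc_iff)
  then have "(\<lambda>n. g (Suc (Suc n))) sums (exp (norm x) - g 0 - g 1)"
    using sums_Suc_iff[of "\<lambda>n. g (Suc n)" "exp (norm x) - g 0 - g 1"] by simp
  then have g2: "(\<lambda>n. g (Suc (Suc n))) sums (exp (norm x) - 1 - norm x)"
    by (simp add: g_def)
  have le: "norm (f (Suc (Suc n))) \<le> g (Suc (Suc n))" for n
    unfolding f_def g_def using norm_power_ineq[of x "Suc (Suc n)"]
    by (simp add: divide_right_mono del: power_Suc)
  have sn: "summable (\<lambda>n. norm (f (Suc (Suc n))))"
    by (rule summable_comparison_test[OF _ sums_summable[OF g2]]) (auto intro!: exI[of _ 0] le)
  have "norm (exp x - 1 - x) = norm (\<Sum>n. f (Suc (Suc n)))" using f2 by (simp add: sums_iff)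
  also have "\<dots> \<le> (\<Sum>n. norm (f (Suc (Suc n))))" by (rule summable_norm[OF sn])
  also have "\<dots> \<le> (\<Sum>n. g (Suc (Suc n)))" by (rule suminf_le[OF le sn sums_summable[OF g2]])
  also have "\<dots> = exp (norm x) - 1 - norm x" using g2 by (simp add: sums_iff)
  finally show ?thesis .
qed

lemma exp_rem_sq:
  fixes x :: "'a::{real_normed_algebra_1,banach}"
  assumes "norm x \<le> 1"
  shows "norm (exp x - 1 - x) \<le> (norm x)\<^sup>2"
  using exp_rem_norm[of x] exp_bound[of "norm x"] assms by simp

definition dq :: "(complex \<Rightarrow> 'n::finite cm) \<Rightarrow> complex \<Rightarrow> complex \<Rightarrow> 'n cm" where
  "dq F x y = ofc (inverse (y - x)) * (F y - F x)"

definition cd :: "(complex \<Rightarrow> 'n::finite cm) \<Rightarrow> 'n cm \<Rightarrow> complex \<Rightarrow> bool" where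
  "cd F D x \<longleftrightarrow> (dq F x \<longlongrightarrow> D) (at x)"

lemma rep_dq: "rep (dq F x y) $ i $ j = (rep (F y) $ i $ j - rep (F x) $ i $ j) / (y - x)"
  by (simp add: dq_def rep_ofc_mult minus_cm.rep_eq divide_inverse mult.commute)

lemma cd_iff: "cd F D x \<longleftrightarrow> (\<forall>i j. ((\<lambda>y. rep (F y) $ i $ j) has_field_derivative rep D $ i $ j) (at x))"
  unfolding cd_def tendsto_cm_entries has_field_derivative_iff rep_dq ..

lemma cd_cont: assumes "cd F D x" shows "isCont F x"
proof -
  have "\<forall>i j. isCont (\<lambda>y. rep (F y) $ i $ j) x"
    using assms unfolding cd_iff by (blast intro: DERIV_isCont)
  then show ?thesis
    unfolding isCont_def tendsto_cm_entries by blast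
qed

lemma cd_unique: "cd F D x \<Longrightarrow> cd F E x \<Longrightarrow> D = E"
  unfolding cd_def using tendsto_unique[OF at_neq_bot] by blast

lemma cd_const: "cd (\<lambda>y. c) 0 x"
  unfolding cd_iff by (simp add: zero_cm.rep_eq)

lemma cd_add: "cd F D x \<Longrightarrow> cd G E x \<Longrightarrow> cd (\<lambda>y. F y + G y) (D + E) x"
  unfolding cd_iff by (auto simp: plus_cm.rep_eq intro!: derivative_intros)

lemma cd_diff: "cd F D x \<Longrightarrow> cd G E x \<Longrightarrow> cd (\<lambda>y. F y - G y) (D - E) x"
  unfolding cd_iff by (auto simp: minus_cm.rep_eq intro!: derivative_intros)

lemma cd_minus: "cd F D x \<Longrightarrow> cd (\<lambda>y. - F y) (- D) x"
  unfolding cd_iff by (auto simp: uminus_cm.rep_eq intro!: derivative_intros)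

lemma rep_times_entry: "rep (a * b) $ i $ j = (\<Sum>k\<in>UNIV. rep a $ i $ k * rep b $ k $ j)"
  by (simp add: times_cm.rep_eq matrix_matrix_mult_def)

lemma cd_mult:
  assumes "cd F D x" "cd G E x"
  shows "cd (\<lambda>y. F y * G y) (D * G x + F x * E) x"
  unfolding cd_iff
proof (intro allI)
  fix i j
  have "((\<lambda>y. \<Sum>k\<in>UNIV. rep (F y) $ i $ k * rep (G y) $ k $ j) has_field_derivative
        (\<Sum>k\<in>UNIV. rep (F x) $ i $ k * rep E $ k $ j + rep D $ i $ k * rep (G x) $ k $ j)) (at x)"
    using assms unfolding cd_iff by (intro DERIV_sum DERIV_mult') auto
  then show "((\<lambda>y. rep (F y * G y) $ i $ j) has_field_derivative rep (D * G x + F x * E) $ i $ j) (at x)"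
    by (simp add: rep_times_entry plus_cm.rep_eq sum.distrib add.commute)
qed

lemma cd_mult_const_left: "cd F D x \<Longrightarrow> cd (\<lambda>y. A * F y) (A * D) x"
  using cd_mult[OF cd_const, of F D x A] by simp

lemma cd_zero_const:
  assumes "open S" "connected S" "\<And>x. x \<in> S \<Longrightarrow> cd F 0 x" "a \<in> S" "b \<in> S"
  shows "F a = F b"
proof -
  have "rep (F a) $ i $ j = rep (F b) $ i $ j" for i j
  proof -
    have d: "\<forall>x\<in>S - {}. ((\<lambda>y. rep (F y) $ i $ j) has_field_derivative 0) (at x)"
      using assms(3) unfolding cd_iff by (simp add: zero_cm.rep_eq)
    have "continuous_on S (\<lambda>y. rep (F y) $ i $ j)"
      using d by (auto intro!: continuous_at_imp_continuous_on DERIV_isCont)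
    then obtain c where "\<And>x. x \<in> S \<Longrightarrow> rep (F x) $ i $ j = c"
      using DERIV_zero_connected_constant[OF assms(2,1) finite.emptyI _ d] by blast
    then show ?thesis using assms(4,5) by simp
  qed
  then show ?thesis by (simp add: rep_inject[symmetric] vec_eq_iff)
qed

lemma cd_comm:
  assumes "cd F D x" "open S" "x \<in> S" "\<And>y. y \<in> S \<Longrightarrow> F y * A = A * F y"
  shows "D * A = A * D"
proof -
  have ev: "eventually (\<lambda>y. y \<in> S) (at x)"
    using assms(2,3) by (simp add: eventually_at_topological) blast
  have eq: "eventually (\<lambda>y. dq F x y * A = A * dq F x y) (at x)"
  proof (rule eventually_mono[OF ev])
    fix y assume "y \<in> S"
    have "dq F x y * A = ofc (inverse (y - x)) * ((F y - F x) * A)"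
      by (simp add: dq_def mult.assoc)
    also have "\<dots> = ofc (inverse (y - x)) * (A * (F y - F x))"
      using assms(3,4) \<open>y \<in> S\<close> by (simp add: algebra_simps)
    also have "\<dots> = A * dq F x y"
      unfolding dq_def by (metis mult.assoc ofc_central)
    finally show "dq F x y * A = A * dq F x y" .
  qed
  have l1: "((\<lambda>y. dq F x y * A) \<longlongrightarrow> D * A) (at x)"
    using assms(1) unfolding cd_def by (intro tendsto_intros)
  have l2: "((\<lambda>y. A * dq F x y) \<longlongrightarrow> A * D) (at x)"
    using assms(1) unfolding cd_def by (intro tendsto_intros)
  have l3: "((\<lambda>y. dq F x y * A) \<longlongrightarrow> A * D) (at x)"
    using Lim_transform_eventually[OF l2] eq by (simp add: eventually_mono)
  show ?thesis using tendsto_unique[OF at_neq_bot l1 l3] .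
qed

lemma norm_ofc_mult: "norm (ofc c * z) \<le> cmod c * norm z"
  using norm_mult_ineq[of "ofc c" z] by (simp add: norm_ofc)

lemma cd_exp:
  assumes d: "cd X D x" and S: "open S" "x \<in> S" and com: "\<And>y. y \<in> S \<Longrightarrow> X y * X x = X x * X y"
  shows "cd (\<lambda>y. exp (X y)) (exp (X x) * D) x"
proof -
  define E0 where "E0 = exp (X x)"
  define Dl where "Dl = (\<lambda>y. X y - X x)"
  define R where "R = (\<lambda>y. ofc (inverse (y - x)) * (exp (Dl y) - 1 - Dl y))"
  have ev: "eventually (\<lambda>y. y \<in> S) (at x)"
    using S by (simp add: eventually_at_topological) blast
  have cont: "isCont X x" by (rule cd_cont[OF d])
  then have Dl0: "(Dl \<longlongrightarrow> 0) (at x)"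
    unfolding Dl_def isCont_def using tendsto_diff[of X "X x" "at x" "\<lambda>_. X x" "X x"] by simp
  then have ev1: "eventually (\<lambda>y. norm (Dl y) \<le> 1) (at x)"
    by (simp add: tendsto_iff dist_norm) (metis (mono_tags, lifting) eventually_mono less_eq_real_def zero_less_one)
  have evne: "eventually (\<lambda>y. y \<noteq> x) (at x)" by (simp add: eventually_at_filter)
  have bound: "eventually (\<lambda>y. norm (R y) \<le> norm (dq X x y) * norm (Dl y)) (at x)"
  proof (rule eventually_mono[OF eventually_conj[OF ev1 evne]])
    fix y assume y: "norm (Dl y) \<le> 1 \<and> y \<noteq> x"
    have Dly: "Dl y = ofc (y - x) * dq X x y"
      using y by (simp add: dq_def Dl_def mult.assoc[symmetric] ofc_mult[symmetric])
    have "norm (R y) \<le> cmod (inverse (y - x)) * norm (exp (Dl y) - 1 - Dl y)"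
      unfolding R_def by (rule norm_ofc_mult)
    also have "\<dots> \<le> cmod (inverse (y - x)) * (norm (Dl y))\<^sup>2"
      using exp_rem_sq[of "Dl y"] y by (simp add: mult_left_mono)
    also have "\<dots> = (cmod (inverse (y - x)) * norm (Dl y)) * norm (Dl y)"
      by (simp add: power2_eq_square)
    also have "cmod (inverse (y - x)) * norm (Dl y) \<le> norm (dq X x y)"
    proof -
      have "norm (Dl y) \<le> cmod (y - x) * norm (dq X x y)"
        using Dly norm_ofc_mult by metis
      moreover have "cmod (y - x) > 0" using y by simp
      ultimately show ?thesis
        by (simp add: norm_inverse pos_divide_le_eq mult.commute divide_inverse[symmetric])
    qed
    then have "(cmod (inverse (y - x)) * norm (Dl y)) * norm (Dl y) \<le> norm (dq X x y) * norm (Dl y)"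
      by (simp add: mult_right_mono)
    finally show "norm (R y) \<le> norm (dq X x y) * norm (Dl y)" .
  qed
  have "((\<lambda>y. norm (dq X x y) * norm (Dl y)) \<longlongrightarrow> norm D * norm (0::'a cm)) (at x)"
    using d Dl0 unfolding cd_def by (intro tendsto_intros)
  then have R0: "(R \<longlongrightarrow> 0) (at x)"
    using Lim_null_comparison[OF bound] by simp
  have lim: "((\<lambda>y. E0 * (dq X x y + R y)) \<longlongrightarrow> E0 * (D + 0)) (at x)"
    using d R0 unfolding cd_def by (intro tendsto_intros)
  have eq: "eventually (\<lambda>y. E0 * (dq X x y + R y) = dq (\<lambda>y. exp (X y)) x y) (at x)"
  proof (rule eventually_mono[OF ev])
    fix y assume "y \<in> S"
    have c: "X x * Dl y = Dl y * X x"
      using com[OF \<open>y \<in> S\<close>] by (simp add: Dl_def algebra_simps)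
    have "exp (X y) = exp (X x + Dl y)" by (simp add: Dl_def)
    also have "\<dots> = E0 * exp (Dl y)" unfolding E0_def by (rule exp_add_commuting[OF c])
    finally have ey: "exp (X y) = E0 * exp (Dl y)" .
    have "dq (\<lambda>y. exp (X y)) x y = ofc (inverse (y - x)) * (E0 * exp (Dl y) - E0)"
      by (simp add: dq_def ey E0_def)
    also have "\<dots> = ofc (inverse (y - x)) * (E0 * (exp (Dl y) - 1))"
      by (simp add: algebra_simps)
    also have "\<dots> = E0 * (ofc (inverse (y - x)) * (exp (Dl y) - 1))"
      by (metis mult.assoc ofc_central)
    also have "\<dots> = E0 * (dq X x y + R y)"
      by (simp add: R_def dq_def Dl_def algebra_simps)
    finally show "E0 * (dq X x y + R y) = dq (\<lambda>y. exp (X y)) x y" by simp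
  qed
  show ?thesis
    unfolding cd_def using Lim_transform_eventually[OF lim eq] by (simp add: E0_def)
qed



lemma matrix_inv_det:
  fixes A :: "complex^'n^'n"
  assumes "det A \<noteq> 0"
  shows "A ** matrix_inv A = mat 1" "matrix_inv A ** A = mat 1"
proof -
  have "invertible A" using assms invertible_det_nz by blast
  then have "\<exists>A'. A ** A' = mat 1 \<and> A' ** A = mat 1" unfolding invertible_def .
  then have "A ** matrix_inv A = mat 1 \<and> matrix_inv A ** A = mat 1"
    unfolding matrix_inv_def by (rule someI_ex)
  then show "A ** matrix_inv A = mat 1" "matrix_inv A ** A = mat 1" by auto
qed

lemma matrix_inv_entry:
  fixes A :: "complex^'n^'n"
  assumes "det A \<noteq> 0"
  shows "matrix_inv A $ k $ j = det (\<chi> i l. if l = k then axis j 1 $ i else A $ i $ l) / det A"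
proof -
  have "A *v (matrix_inv A *v axis j 1) = axis j 1"
    by (simp add: matrix_vector_mul_assoc matrix_inv_det[OF assms])
  then have "matrix_inv A *v axis j 1 = (\<chi> k. det (\<chi> i l. if l = k then axis j 1 $ i else A $ i $ l) / det A)"
    using cramer[OF assms] by blast
  moreover have "(matrix_inv A *v axis j 1) $ k = matrix_inv A $ k $ j"
    by (simp add: matrix_vector_mult_def axis_def if_distrib cong: if_cong)
  ultimately show ?thesis by simp
qed

lemma holo_det:
  assumes "\<And>i j. (\<lambda>w. M w $ i $ j) holomorphic_on S"
  shows "(\<lambda>w. det (M w :: complex^'n^'n)) holomorphic_on S"
  unfolding det_def by (intro holomorphic_intros assms)

lemma holo_matrix_inv:
  assumes "\<And>i j. (\<lambda>w. M w $ i $ j) holomorphic_on S" "\<And>w. w \<in> S \<Longrightarrow> det (M w :: complex^'n^'n) \<noteq> 0"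
  shows "(\<lambda>w. matrix_inv (M w) $ k $ j) holomorphic_on S"
proof -
  have h1: "(\<lambda>z. if l = k then axis j 1 $ i else M z $ i $ l) holomorphic_on S" for i l
    by (cases "l = k") (simp_all add: assms)
  have "(\<lambda>w. det (\<chi> i l. if l = k then axis j 1 $ i else M w $ i $ l) / det (M w)) holomorphic_on S"
    by (intro holomorphic_intros holo_det assms) (auto simp: assms h1)
  then show ?thesis
    by (rule holomorphic_transform) (simp add: matrix_inv_entry assms)
qed

definition mholo :: "(complex \<Rightarrow> 'n::finite cm) \<Rightarrow> complex set \<Rightarrow> bool" where
  "mholo F S \<longleftrightarrow> (\<forall>i j. (\<lambda>w. rep (F w) $ i $ j) holomorphic_on S)"

definition cmderiv :: "(complex \<Rightarrow> 'n::finite cm) \<Rightarrow> complex \<Rightarrow> 'n cm" where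
  "cmderiv F w = abs (\<chi> i j. deriv (\<lambda>v. rep (F v) $ i $ j) w)"

definition cminv :: "'n::finite cm \<Rightarrow> 'n cm" where
  "cminv X = abs (matrix_inv (rep X))"

lemma cminv: assumes "det (rep X) \<noteq> 0" shows "cminv X * X = 1" "X * cminv X = 1"
  using matrix_inv_det[OF assms]
  by (simp_all add: cminv_def rep_inject[symmetric] times_cm.rep_eq one_cm.rep_eq abs_inverse)

lemma mholo_cd: "mholo F S \<Longrightarrow> open S \<Longrightarrow> w \<in> S \<Longrightarrow> cd F (cmderiv F w) w"
  unfolding cd_iff mholo_def cmderiv_def by (auto simp: abs_inverse intro!: holomorphic_derivI)

lemma mholo_cmderiv: "mholo F S \<Longrightarrow> open S \<Longrightarrow> mholo (cmderiv F) S"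
  unfolding mholo_def cmderiv_def by (simp add: abs_inverse holomorphic_deriv)

lemma mholo_mult: "mholo F S \<Longrightarrow> mholo G S \<Longrightarrow> mholo (\<lambda>w. F w * G w) S"
  unfolding mholo_def rep_times_entry by (intro allI holomorphic_intros) auto

lemma mholo_cminv: "mholo F S \<Longrightarrow> (\<And>w. w \<in> S \<Longrightarrow> det (rep (F w)) \<noteq> 0) \<Longrightarrow> mholo (\<lambda>w. cminv (F w)) S"
  unfolding mholo_def cminv_def by (simp add: abs_inverse holo_matrix_inv)

lemma comm_inv:
  fixes A B Bi :: "'a::monoid_mult"
  assumes "A * B = B * A" "Bi * B = 1" "B * Bi = 1"
  shows "A * Bi = Bi * A"
proof -
  have "Bi * A = Bi * A * (B * Bi)" by (simp add: assms)
  also have "\<dots> = Bi * (A * B) * Bi" by (simp add: mult.assoc)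
  also have "\<dots> = Bi * (B * A) * Bi" by (simp add: assms)
  also have "\<dots> = (Bi * B) * A * Bi" by (simp add: mult.assoc)
  finally show ?thesis by (simp add: assms)
qed

lemma cd_holo: assumes "\<And>w. w \<in> S \<Longrightarrow> cd F (D w) w" "open S" shows "mholo F S"
  unfolding mholo_def
proof (intro allI)
  fix i j
  show "(\<lambda>w. rep (F w) $ i $ j) holomorphic_on S"
    unfolding holomorphic_on_open[OF assms(2)] using assms(1) unfolding cd_iff by blast
qed

locale logsetting =
  fixes S :: "complex set" and h :: "complex \<Rightarrow> 'n::finite cm"
  assumes S_open: "open S" and S_star: "\<And>x. x \<in> S \<Longrightarrow> closed_segment 0 x \<subseteq> S" and zero_in: "0 \<in> S"
    and h_holo: "mholo h S" and h_det: "\<And>w. w \<in> S \<Longrightarrow> det (rep (h w)) \<noteq> 0"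
    and h0: "h 0 = 1" and h_comm: "\<And>v w. v \<in> S \<Longrightarrow> w \<in> S \<Longrightarrow> h v * h w = h w * h v"
begin

definition g where "g w = cminv (h w) * cmderiv h w"

lemma S_starlike: "starlike S" unfolding starlike_def using zero_in S_star by blast
lemma S_conn: "connected S" by (rule starlike_imp_connected[OF S_starlike])

lemma g_holo: "mholo g S"
  unfolding g_def by (intro mholo_mult mholo_cminv mholo_cmderiv h_holo S_open h_det)

lemma hd_cd: "w \<in> S \<Longrightarrow> cd h (cmderiv h w) w" by (rule mholo_cd[OF h_holo S_open])

lemma comm_h_hd: "v \<in> S \<Longrightarrow> w \<in> S \<Longrightarrow> cmderiv h w * h v = h v * cmderiv h w"
  by (rule cd_comm[OF hd_cd S_open]) (auto intro: h_comm)

lemma comm_g: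
  assumes "w \<in> S" "A * h w = h w * A" "A * cmderiv h w = cmderiv h w * A"
  shows "A * g w = g w * A"
proof -
  have "A * cminv (h w) = cminv (h w) * A"
    by (rule comm_inv[OF assms(2) cminv[OF h_det[OF assms(1)]]])
  then show ?thesis unfolding g_def by (metis assms(3) mult.assoc)
qed

lemma T_ex: "\<exists>T. (\<forall>w\<in>S. cd T (g w) w) \<and> T 0 = 0"
proof -
  have "\<forall>i j. \<exists>G. \<forall>w\<in>S. (G has_field_derivative rep (g w) $ i $ j) (at w)"
  proof (intro allI)
    fix i j
    have hol: "(\<lambda>w. rep (g w) $ i $ j) holomorphic_on S" using g_holo unfolding mholo_def by blast
    show "\<exists>G. \<forall>w\<in>S. (G has_field_derivative rep (g w) $ i $ j) (at w)"
      by (rule holomorphic_starlike_primitive[OF holomorphic_on_imp_continuous_on[OF hol] S_starlike S_open finite.emptyI])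
         (use hol S_open in \<open>auto simp: holomorphic_on_open field_differentiable_def\<close>)
  qed
  then obtain G where G: "\<And>i j w. w \<in> S \<Longrightarrow> (G i j has_field_derivative rep (g w) $ i $ j) (at w)"
    by metis
  define T where "T = (\<lambda>w. abs (\<chi> i j. G i j w - G i j 0) :: 'n cm)"
  have "\<forall>w\<in>S. cd T (g w) w"
    unfolding cd_iff T_def by (auto simp: abs_inverse intro!: derivative_eq_intros G)
  moreover have "T 0 = 0"
  proof -
    have "(\<chi> i j. G i j 0 - G i j 0) = (0::complex^'n^'n)" by (simp add: vec_eq_iff)
    then show ?thesis by (simp add: T_def zero_cm_def)
  qed
  ultimately show ?thesis by blast
qed

definition T where "T = (SOME T. (\<forall>w\<in>S. cd T (g w) w) \<and> T 0 = 0)"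

lemma T_cd: "w \<in> S \<Longrightarrow> cd T (g w) w" and T0: "T 0 = 0"
  using someI_ex[OF T_ex] unfolding T_def[symmetric] by auto

lemma T_holo: "mholo T S" by (rule cd_holo[OF T_cd S_open])

lemma comm_T_gen:
  assumes "\<And>z. z \<in> S \<Longrightarrow> A * g z = g z * A" "w \<in> S"
  shows "A * T w = T w * A"
proof -
  define C where "C = (\<lambda>w. A * T w - T w * A)"
  have "cd C 0 z" if "z \<in> S" for z
  proof -
    have "cd C (A * g z - (g z * A + T z * 0)) z"
      unfolding C_def by (intro cd_diff cd_mult_const_left cd_mult T_cd that cd_const)
    then show ?thesis using assms(1)[OF that] by simp
  qed
  then have "C w = C 0" using cd_zero_const[OF S_open S_conn _ assms(2) zero_in] by blast
  then show ?thesis by (simp add: C_def T0)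
qed

lemma comm_hT: "v \<in> S \<Longrightarrow> w \<in> S \<Longrightarrow> h v * T w = T w * h v"
  by (rule comm_T_gen) (auto intro!: comm_g h_comm simp: comm_h_hd)

lemma comm_Tg: "v \<in> S \<Longrightarrow> z \<in> S \<Longrightarrow> T v * g z = g z * T v"
proof (rule comm_g)
  assume "v \<in> S" "z \<in> S"
  show "T v * h z = h z * T v" using comm_hT[OF \<open>z \<in> S\<close> \<open>v \<in> S\<close>] by simp
  show "T v * cmderiv h z = cmderiv h z * T v"
    using cd_comm[OF hd_cd[OF \<open>z \<in> S\<close>] S_open \<open>z \<in> S\<close>, of "T v"] comm_hT \<open>v \<in> S\<close> by auto
qed

lemma comm_TT: "v \<in> S \<Longrightarrow> w \<in> S \<Longrightarrow> T v * T w = T w * T v"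
  by (rule comm_T_gen) (auto intro: comm_Tg)

lemma exp_T: assumes "w \<in> S" shows "exp (T w) = h w"
proof -
  define F where "F = (\<lambda>w. exp (- T w) * h w)"
  have "cd F 0 z" if z: "z \<in> S" for z
  proof -
    have e: "cd (\<lambda>y. exp (- T y)) (exp (- T z) * (- g z)) z"
      by (rule cd_exp[OF cd_minus[OF T_cd[OF z]] S_open z]) (simp add: comm_TT z)
    have "cd F (exp (- T z) * (- g z) * h z + exp (- T z) * cmderiv h z) z"
      unfolding F_def by (rule cd_mult[OF e hd_cd[OF z]])
    moreover have "g z * h z = cmderiv h z"
    proof -
      have "g z * h z = cminv (h z) * (cmderiv h z * h z)" by (simp add: g_def mult.assoc)
      also have "\<dots> = cminv (h z) * (h z * cmderiv h z)" by (simp add: comm_h_hd z)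
      also have "\<dots> = cmderiv h z" by (simp add: mult.assoc[symmetric] cminv[OF h_det[OF z]])
      finally show ?thesis .
    qed
    ultimately show ?thesis by (simp add: mult.assoc algebra_simps)
  qed
  then have "F w = F 0" using cd_zero_const[OF S_open S_conn _ assms zero_in] by blast
  then have "exp (- T w) * h w = 1" by (simp add: F_def T0 h0)
  then have "exp (T w) * (exp (- T w) * h w) = exp (T w)" by simp
  then show ?thesis by (simp add: mult.assoc[symmetric] exp_minus_inverse)
qed

end



lemma pow_diff_bound:
  fixes a b :: "'a::real_normed_algebra_1"
  assumes "norm a \<le> m" "norm b \<le> m"
  shows "norm (a ^ k - b ^ k) \<le> real k * m ^ (k - 1) * norm (a - b)"
proof (induction k)
  case 0 then show ?case by simp
next
  case (Suc k)
  have m0: "0 \<le> m" using assms(1) norm_ge_zero order_trans by blast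
  have eq: "a ^ Suc k - b ^ Suc k = a * (a ^ k - b ^ k) + (a - b) * b ^ k"
    by (simp add: algebra_simps)
  have "norm (a * (a ^ k - b ^ k)) \<le> m * (real k * m ^ (k - 1) * norm (a - b))"
    using norm_mult_ineq[of a "a ^ k - b ^ k"] Suc.IH assms(1)
    by (meson mult_mono m0 norm_ge_zero order_trans)
  also have "\<dots> = real k * m ^ k * norm (a - b)"
    by (cases k) (simp_all add: algebra_simps)
  finally have 1: "norm (a * (a ^ k - b ^ k)) \<le> real k * m ^ k * norm (a - b)" .
  have "norm ((a - b) * b ^ k) \<le> norm (a - b) * norm (b ^ k)" by (rule norm_mult_ineq)
  also have "\<dots> \<le> norm (a - b) * m ^ k"
    by (rule mult_left_mono) (use norm_power_ineq[of b k] power_mono[OF assms(2) norm_ge_zero, of k] in auto)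
  finally have 2: "norm ((a - b) * b ^ k) \<le> m ^ k * norm (a - b)" by (simp add: mult.commute)
  have "norm (a ^ Suc k - b ^ Suc k) \<le> real k * m ^ k * norm (a - b) + m ^ k * norm (a - b)"
    unfolding eq using norm_triangle_le[OF add_mono[OF 1 2]] .
  then show ?case by (simp add: algebra_simps)
qed

lemma exp_inj_small:
  fixes a b :: "'a::{real_normed_algebra_1,banach}"
  assumes "norm a \<le> 1/2" "norm b \<le> 1/2" "exp a = exp b"
  shows "a = b"
proof (rule ccontr)
  assume ne: "a \<noteq> b"
  define m :: real where "m = 1/2"
  have am: "norm a \<le> m" "norm b \<le> m" using assms m_def by auto
  define d where "d = (\<lambda>n. (a ^ n - b ^ n) /\<^sub>R fact n)"
  have "d sums (exp a - exp b)" unfolding d_def scaleR_diff_right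
    by (intro sums_diff exp_converges)
  then have "d sums 0" using assms(3) by simp
  then have "(\<lambda>n. d (Suc n)) sums (0 - d 0)" by (simp add: sums_Suc_iff)
  then have "(\<lambda>n. d (Suc (Suc n))) sums (0 - d 0 - d 1)"
    using sums_Suc_iff[of "\<lambda>n. d (Suc n)" "0 - d 0 - d 1"] by simp
  then have ds: "(\<lambda>n. d (Suc (Suc n))) sums (b - a)" by (simp add: d_def)
  define c where "c = (\<lambda>n. m ^ Suc n /\<^sub>R fact (Suc n))"
  have "(\<lambda>n. m ^ n /\<^sub>R fact n) sums exp m" by (rule exp_converges)
  then have cs: "c sums (exp m - 1)" unfolding c_def using sums_Suc_iff[of "\<lambda>n. m ^ n /\<^sub>R fact n" "exp m - 1"] by simp
  have le: "norm (d (Suc (Suc n))) \<le> c n * norm (a - b)" for n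
  proof -
    have "norm (d (Suc (Suc n))) = norm (a ^ Suc (Suc n) - b ^ Suc (Suc n)) / fact (Suc (Suc n))"
      by (simp add: d_def divide_inverse mult.commute del: fact_Suc power_Suc)
    also have "\<dots> \<le> (real (Suc (Suc n)) * m ^ Suc n * norm (a - b)) / fact (Suc (Suc n))"
      by (rule divide_right_mono) (use pow_diff_bound[OF am, of "Suc (Suc n)"] in auto)
    also have "\<dots> = c n * norm (a - b)"
      unfolding c_def by (simp add: field_simps del: of_nat_Suc)
    finally show ?thesis .
  qed
  have sc: "summable (\<lambda>n. c n * norm (a - b))"
    using summable_mult2[OF sums_summable[OF cs]] .
  have sn: "summable (\<lambda>n. norm (d (Suc (Suc n))))"
    by (rule summable_comparison_test[OF _ sc]) (auto intro!: exI[of _ 0] le)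
  have "norm (a - b) = norm (\<Sum>n. d (Suc (Suc n)))"
    using ds by (simp add: sums_iff norm_minus_commute)
  also have "\<dots> \<le> (\<Sum>n. norm (d (Suc (Suc n))))" by (rule summable_norm[OF sn])
  also have "\<dots> \<le> (\<Sum>n. c n * norm (a - b))" by (rule suminf_le[OF le sn sc])
  also have "\<dots> = (exp m - 1) * norm (a - b)"
    using cs by (simp add: suminf_mult2[symmetric] sums_iff)
  finally have *: "norm (a - b) \<le> (exp m - 1) * norm (a - b)" .
  have "exp m \<le> 1 + m + m\<^sup>2" by (rule exp_bound) (auto simp: m_def)
  then have "exp m - 1 < 1" by (simp add: m_def power2_eq_square)
  moreover have "norm (a - b) > 0" using ne by simp
  ultimately show False using * by (smt (verit) mult_less_cancel_right2)
qed

lemma tendsto_det: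
  assumes "(M \<longlongrightarrow> M0) F"
  shows "((\<lambda>x. det (M x :: complex^'n^'n)) \<longlongrightarrow> det M0) F"
  unfolding det_def by (intro tendsto_intros assms)

lemma det_bound:
  fixes X :: "complex^'n^'n"
  shows "cmod (det X) \<le> real (card {p. p permutes (UNIV::'n set)}) * norm X ^ CARD('n)"
proof -
  have "cmod (det X) \<le> (\<Sum>p\<in>{p. p permutes (UNIV::'n set)}. cmod (of_int (sign p) * (\<Prod>i\<in>UNIV. X $ i $ p i)))"
    unfolding det_def by (rule norm_sum)
  also have "\<dots> \<le> (\<Sum>p\<in>{p. p permutes (UNIV::'n set)}. norm X ^ CARD('n))"
  proof (rule sum_mono)
    fix p :: "'n \<Rightarrow> 'n"
    have "cmod (of_int (sign p) * (\<Prod>i\<in>UNIV. X $ i $ p i)) = (\<Prod>i\<in>UNIV. cmod (X $ i $ p i))"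
      by (simp add: norm_mult prod_norm[symmetric] sign_def)
    also have "\<dots> \<le> (\<Prod>i\<in>(UNIV::'n set). norm X)"
      by (intro prod_mono) (simp add: cmod_entry_le_frob)
    finally show "cmod (of_int (sign p) * (\<Prod>i\<in>UNIV. X $ i $ p i)) \<le> norm X ^ CARD('n)" by simp
  qed
  also have "\<dots> = real (card {p. p permutes (UNIV::'n set)}) * norm X ^ CARD('n)" by simp
  finally show ?thesis .
qed

lemma det_at_infinity_imp:
  assumes "filterlim (\<lambda>x. det (M x :: complex^'n^'n)) at_infinity F"
  shows "filterlim M at_infinity F"
proof -
  define K where "K = real (card {p. p permutes (UNIV::'n set)})"
  have K1: "K \<ge> 1"
  proof -
    have "finite {p. p permutes (UNIV::'n set)}" by (rule finite_permutations) simp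
    moreover have "id \<in> {p. p permutes (UNIV::'n set)}" by (simp add: permutes_id)
    ultimately have "card {p. p permutes (UNIV::'n set)} \<ge> 1"
      by (metis One_nat_def Suc_leI card_gt_0_iff empty_iff)
    then show ?thesis by (simp add: K_def)
  qed
  show ?thesis
    unfolding filterlim_at_infinity[OF order_refl]
  proof (intro allI impI)
    fix r :: real assume r: "r > 0"
    have "eventually (\<lambda>x. K * r ^ CARD('n) + 1 \<le> norm (det (M x))) F"
      using assms unfolding filterlim_at_infinity[OF order_refl]
      by (metis add_pos_nonneg less_add_same_cancel2 K1 r zero_less_power order_less_le_trans
          mult_nonneg_nonneg zero_le_one le_add_same_cancel2 less_le_not_le linorder_not_le
          mult_pos_pos order.strict_trans1 zero_less_one)
    then show "eventually (\<lambda>x. r \<le> norm (M x)) F"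
    proof (rule eventually_mono)
      fix x assume x: "K * r ^ CARD('n) + 1 \<le> norm (det (M x))"
      have "K * r ^ CARD('n) < K * norm (M x) ^ CARD('n)"
        using x det_bound[of "M x"] unfolding K_def by linarith
      then have "r ^ CARD('n) < norm (M x) ^ CARD('n)" using K1 by simp
      then show "r \<le> norm (M x)" using power_less_imp_less_base[of r _ "norm (M x)"] by force
    qed
  qed
qed

lemma poly_det:
  fixes P :: "complex poly^'n^'n"
  shows "poly (det P) u = det (\<chi> i j. poly (P $ i $ j) u)"
  unfolding det_def by (simp add: poly_sum poly_prod)

lemma det_div:
  fixes A :: "complex^'n^'n"
  shows "det (\<chi> i j. A $ i $ j / c) = det A / c ^ CARD('n)"
proof -
  have "det (\<chi> i j. A $ i $ j / c) = (\<Sum>p\<in>{p. p permutes UNIV}. of_int (sign p) * (\<Prod>i\<in>UNIV. A $ i $ p i) / c ^ CARD('n))"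
    unfolding det_def by (intro sum.cong refl) (simp add: prod_dividef)
  also have "\<dots> = det A / c ^ CARD('n)"
    unfolding det_def by (simp add: sum_divide_distrib)
  finally show ?thesis .
qed



lemma eventually_notin_finite:
  assumes "finite A" shows "eventually (\<lambda>v. v \<notin> A) (at (u::complex))"
proof -
  obtain d where d: "d > 0" "\<forall>x\<in>A. x \<noteq> u \<longrightarrow> d \<le> dist u x"
    using finite_set_avoid[OF assms] by blast
  show ?thesis unfolding eventually_at
    using d by (metis dist_commute not_le)
qed

locale ratfun =
  fixes \<xi> :: "complex \<Rightarrow> complex^'n^'n" and P :: "complex poly^'n^'n" and q :: "complex poly"
  assumes q_nz: "q \<noteq> 0"
    and formula: "\<And>u. poly q u \<noteq> 0 \<Longrightarrow> \<xi> u = (\<chi> i j. poly (P$i$j) u / poly q u)"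
    and cont: "\<And>u. \<not> is_pole \<xi> u \<Longrightarrow> isCont \<xi> u"
    and at_inf: "(\<xi> \<longlongrightarrow> mat 1) at_infinity"
begin

definition Z where "Z = {u. poly q u = 0}"
lemma Z_fin: "finite Z" unfolding Z_def using poly_roots_finite[OF q_nz] .

definition R where "R v = (\<chi> i j. poly (P$i$j) v / poly q v)"

lemma notpole_q: assumes "poly q u \<noteq> 0" shows "\<not> is_pole \<xi> u" "isCont \<xi> u"
proof -
  have "isCont R u" unfolding R_def isCont_def using assms
    by (intro tendsto_vec_lambda tendsto_divide tendsto_intros) auto
  then have lim: "(R \<longlongrightarrow> \<xi> u) (at u)" by (simp add: isCont_def R_def formula[OF assms])
  have "eventually (\<lambda>v. v \<notin> Z) (at u)" by (rule eventually_notin_finite[OF Z_fin])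
  then have "eventually (\<lambda>v. R v = \<xi> v) (at u)"
    by (rule eventually_mono) (simp add: Z_def R_def formula)
  then have "(\<xi> \<longlongrightarrow> \<xi> u) (at u)" using Lim_transform_eventually[OF lim] by blast
  then show "isCont \<xi> u" by (simp add: isCont_def)
  show "\<not> is_pole \<xi> u"
    unfolding is_pole_def using not_tendsto_and_filterlim_at_infinity[OF at_neq_bot \<open>(\<xi> \<longlongrightarrow> \<xi> u) (at u)\<close>] by blast
qed

definition N where "N = {u. \<not> is_pole \<xi> u}"

lemma N_compl: "- N \<subseteq> Z" unfolding N_def Z_def using notpole_q by blast

lemma N_open: "open N"
proof -
  have "finite (- N)" using N_compl Z_fin finite_subset by blast
  then have "closed (- N)" by (rule finite_imp_closed)
  then show ?thesis by (simp add: closed_def)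
qed

lemma xi_holo: "(\<lambda>u. \<xi> u $ i $ j) holomorphic_on N"
  unfolding holomorphic_on_open[OF N_open]
proof
  fix x assume x: "x \<in> N"
  obtain e where e: "e > 0" "\<forall>w\<in>ball x e. w \<in> UNIV \<and> (w \<noteq> x \<longrightarrow> w \<notin> Z)"
    using finite_ball_avoid[OF open_UNIV Z_fin, of x] by blast
  have h1: "(\<lambda>u. \<xi> u $ i $ j) holomorphic_on (ball x e - {x})"
  proof (rule holomorphic_transform)
    show "(\<lambda>u. poly (P$i$j) u / poly q u) holomorphic_on (ball x e - {x})"
      using e by (intro holomorphic_intros) (auto simp: Z_def)
    show "\<And>u. u \<in> ball x e - {x} \<Longrightarrow> poly (P$i$j) u / poly q u = \<xi> u $ i $ j"
      using e by (auto simp: Z_def formula)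
  qed
  have c0: "((\<lambda>u. \<xi> u $ i $ j) \<longlongrightarrow> \<xi> x $ i $ j) (at x)"
    using cont[of x] x unfolding N_def isCont_def by (intro tendsto_vec_nth) auto
  have c: "((\<lambda>u. \<xi> u $ i $ j) \<longlongrightarrow> \<xi> x $ i $ j) (at x within ball x e)"
    using tendsto_within_subset[OF c0 subset_UNIV] .
  have "(\<lambda>u. \<xi> u $ i $ j) holomorphic_on ball x e"
    by (rule no_isolated_singularity'[OF _ h1 open_ball]) (use c in auto)
  moreover have "x \<in> ball x e" using e by simp
  ultimately show "\<exists>f'. ((\<lambda>u. \<xi> u $ i $ j) has_field_derivative f') (at x)"
    using holomorphic_derivI[OF _ open_ball] by blast
qed

definition Dp where "Dp = det P"

lemma det_xi: "poly q u \<noteq> 0 \<Longrightarrow> det (\<xi> u) = poly Dp u / poly q u ^ CARD('n)"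
  by (simp add: formula Dp_def poly_det det_div[of "\<chi> i j. poly (P $ i $ j) u", simplified])

lemma Dp_nz: "Dp \<noteq> 0"
proof
  assume D0: "Dp = 0"
  obtain B where B: "\<forall>z\<in>Z. norm z \<le> B"
    using finite_imp_bounded[OF Z_fin] bounded_iff by blast
  have "eventually (\<lambda>u. poly q u \<noteq> 0) at_infinity"
    unfolding eventually_at_infinity
  proof (intro exI[of _ "B + 1"] allI impI)
    fix x :: complex assume "B + 1 \<le> norm x"
    then show "poly q x \<noteq> 0" using B by (force simp: Z_def)
  qed
  then have "eventually (\<lambda>u. det (\<xi> u) = 0) at_infinity"
    by (rule eventually_mono) (simp add: det_xi D0)
  then have l0: "((\<lambda>u. det (\<xi> u)) \<longlongrightarrow> 0) at_infinity"
    by (rule tendsto_eventually)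
  have l1: "((\<lambda>u. det (\<xi> u)) \<longlongrightarrow> det (mat 1 :: complex^'n^'n)) at_infinity"
    by (rule tendsto_det[OF at_inf])
  have "(0::complex) = det (mat 1 :: complex^'n^'n)"
    using tendsto_unique[OF _ l0 l1] trivial_limit_at_infinity by blast
  then show False by simp
qed

definition W where "W = {u. poly Dp u = 0}"
lemma W_fin: "finite W" unfolding W_def using poly_roots_finite[OF Dp_nz] .

lemma det_nz_out: "u \<notin> Z \<union> W \<Longrightarrow> det (\<xi> u) \<noteq> 0"
  by (simp add: det_xi Z_def W_def)

definition Mod :: "'n \<Rightarrow> 'n \<Rightarrow> complex^'n^'n \<Rightarrow> complex^'n^'n" where
  "Mod k j A = (\<chi> i l. if l = k then axis j 1 $ i else A $ i $ l)"

lemma tendsto_Mod: "(M \<longlongrightarrow> M0) F \<Longrightarrow> ((\<lambda>x. Mod k j (M x)) \<longlongrightarrow> Mod k j M0) F"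
  unfolding Mod_def by (intro tendsto_vec_lambda) (auto intro!: tendsto_vec_nth)

lemma notpole_inv: assumes "u \<notin> Z \<union> W" shows "\<not> is_pole (\<lambda>v. matrix_inv (\<xi> v)) u"
proof -
  have u: "poly q u \<noteq> 0" using assms by (simp add: Z_def)
  have cu: "(\<xi> \<longlongrightarrow> \<xi> u) (at u)" using notpole_q(2)[OF u] by (simp add: isCont_def)
  have du: "det (\<xi> u) \<noteq> 0" by (rule det_nz_out[OF assms])
  have ev: "eventually (\<lambda>v. v \<notin> Z \<union> W) (at u)"
    by (rule eventually_notin_finite) (simp add: Z_fin W_fin)
  have "((\<lambda>v. matrix_inv (\<xi> v) $ k $ j) \<longlongrightarrow> matrix_inv (\<xi> u) $ k $ j) (at u)" for k j
  proof -
    have "((\<lambda>v. det (Mod k j (\<xi> v)) / det (\<xi> v)) \<longlongrightarrow> det (Mod k j (\<xi> u)) / det (\<xi> u)) (at u)"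
      by (intro tendsto_divide tendsto_det tendsto_Mod cu du)
    moreover have "eventually (\<lambda>v. det (Mod k j (\<xi> v)) / det (\<xi> v) = matrix_inv (\<xi> v) $ k $ j) (at u)"
      by (rule eventually_mono[OF ev]) (simp add: matrix_inv_entry det_nz_out Mod_def)
    ultimately show ?thesis
      using Lim_transform_eventually by (fastforce simp: matrix_inv_entry[OF du] Mod_def)
  qed
  then have "((\<lambda>v. matrix_inv (\<xi> v)) \<longlongrightarrow> matrix_inv (\<xi> u)) (at u)"
    by (intro vec_tendstoI) simp
  then show ?thesis
    unfolding is_pole_def using not_tendsto_and_filterlim_at_infinity[OF at_neq_bot] by blast
qed

lemma pole_set_sub: "pole_set \<xi> \<subseteq> Z \<union> W"
  unfolding pole_set_def using notpole_inv notpole_q(1) by (auto simp: Z_def)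

lemma pole_set_fin: "finite (pole_set \<xi>)"
  using pole_set_sub Z_fin W_fin finite_subset by blast

lemma det_nz:
  assumes "\<not> is_pole \<xi> u" "\<not> is_pole (\<lambda>v. matrix_inv (\<xi> v)) u"
  shows "det (\<xi> u) \<noteq> 0"
proof
  assume d0: "det (\<xi> u) = 0"
  have "((\<lambda>v. det (\<xi> v)) \<longlongrightarrow> 0) (at u)"
    using tendsto_det[of \<xi> "\<xi> u" "at u"] cont[OF assms(1)] d0 by (simp add: isCont_def)
  moreover have ev: "eventually (\<lambda>v. v \<notin> Z \<union> W) (at u)"
    by (rule eventually_notin_finite) (simp add: Z_fin W_fin)
  then have "eventually (\<lambda>v. det (\<xi> v) \<noteq> 0) (at u)"
    by (rule eventually_mono) (rule det_nz_out)
  ultimately have "filterlim (\<lambda>v. det (\<xi> v)) (at 0) (at u)"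
    by (rule filterlim_atI)
  then have f: "filterlim (\<lambda>v. inverse (det (\<xi> v))) at_infinity (at u)"
    by (rule filterlim_compose[OF filterlim_inverse_at_infinity])
  have ev2: "eventually (\<lambda>v. inverse (det (\<xi> v)) = det (matrix_inv (\<xi> v))) (at u)"
  proof (rule eventually_mono[OF ev])
    fix v assume "v \<notin> Z \<union> W"
    then have dv: "det (\<xi> v) \<noteq> 0" by (rule det_nz_out)
    have "det (\<xi> v) * det (matrix_inv (\<xi> v)) = 1"
      using det_mul[of "\<xi> v" "matrix_inv (\<xi> v)"] matrix_inv_det(1)[OF dv] by simp
    then show "inverse (det (\<xi> v)) = det (matrix_inv (\<xi> v))"
      using dv by (simp add: field_simps)
  qed
  then have "filterlim (\<lambda>v. det (matrix_inv (\<xi> v))) at_infinity (at u)"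
    using filterlim_cong[OF refl refl ev2] f by simp
  then have "is_pole (\<lambda>v. matrix_inv (\<xi> v)) u"
    unfolding is_pole_def by (rule det_at_infinity_imp)
  with assms(2) show False by simp
qed

lemma no_poles_const:
  assumes "pole_set \<xi> = {}"
  shows "\<xi> u = mat 1"
proof -
  have NU: "N = UNIV" using assms unfolding N_def pole_set_def by auto
  have "\<xi> u $ i $ j = mat 1 $ i $ j" for i j
  proof (rule Liouville_weak[of "\<lambda>u. \<xi> u $ i $ j" "mat 1 $ i $ j"])
    show "(\<lambda>u. \<xi> u $ i $ j) holomorphic_on UNIV" using xi_holo NU by simp
    show "((\<lambda>u. \<xi> u $ i $ j) \<longlongrightarrow> mat 1 $ i $ j) at_infinity"
      by (intro tendsto_vec_nth at_inf)
  qed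
  then show ?thesis by (simp add: vec_eq_iff)
qed

end



context ratfun
begin

definition cX where "cX = cutX \<xi>"
definition S where "S = - cX"

lemma cX_compact: "compact cX"
  unfolding cX_def cutX_def using pole_set_fin by (intro compact_UN) auto

lemma S_open: "open S"
  unfolding S_def using cX_compact by (simp add: compact_imp_closed open_Compl)

lemma S_nopole: assumes "u \<in> S" shows "\<not> is_pole \<xi> u" "\<not> is_pole (\<lambda>v. matrix_inv (\<xi> v)) u"
proof -
  have "u \<notin> pole_set \<xi>"
  proof
    assume "u \<in> pole_set \<xi>"
    then have "u \<in> cX" unfolding cX_def cutX_def by blast
    then show False using assms by (simp add: S_def)
  qed
  then show "\<not> is_pole \<xi> u" "\<not> is_pole (\<lambda>v. matrix_inv (\<xi> v)) u" by (auto simp: pole_set_def)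
qed

lemma S_N: "S \<subseteq> N" using S_nopole unfolding N_def by blast

lemma S_det: "u \<in> S \<Longrightarrow> det (\<xi> u) \<noteq> 0" using det_nz S_nopole by blast

lemma S_ray: assumes "u \<in> S" "c \<ge> 1" shows "of_real c * u \<in> S"
proof (rule ccontr)
  assume "of_real c * u \<notin> S"
  then obtain a where a: "a \<in> pole_set \<xi>" "of_real c * u \<in> closed_segment 0 a"
    unfolding S_def cX_def cutX_def by blast
  then obtain t where t: "0 \<le> t" "t \<le> 1" "of_real c * u = t *\<^sub>R a"
    unfolding in_segment by auto
  have "u = (t / c) *\<^sub>R a"
    using t(3) assms(2) by (simp add: scaleR_conv_of_real field_simps)
  moreover have "0 \<le> t / c" "t / c \<le> 1" using t assms(2) by (auto simp: divide_le_eq)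
  ultimately have "u \<in> closed_segment 0 a" unfolding in_segment by (intro exI[of _ "t / c"]) auto
  then have "u \<in> cX" using a(1) unfolding cX_def cutX_def by blast
  then show False using assms(1) by (simp add: S_def)
qed

definition Rb where "Rb = (SOME R. R > 0 \<and> (\<forall>x\<in>cX. norm x \<le> R))"

lemma Rb: "Rb > 0" "x \<in> cX \<Longrightarrow> norm x \<le> Rb"
proof -
  have "\<exists>R. R > 0 \<and> (\<forall>x\<in>cX. norm x \<le> R)"
    using compact_imp_bounded[OF cX_compact] bounded_pos by blast
  then have "Rb > 0 \<and> (\<forall>x\<in>cX. norm x \<le> Rb)" unfolding Rb_def by (rule someI_ex)
  then show "Rb > 0" "x \<in> cX \<Longrightarrow> norm x \<le> Rb" by auto
qed

definition r0 where "r0 = 1 / (Rb + 1)"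
lemma r0_pos: "r0 > 0" using Rb(1) by (simp add: r0_def)

definition S' where "S' = ball 0 r0 \<union> {w. w \<noteq> 0 \<and> inverse w \<in> S}"

lemma S'_inv: assumes "w \<in> S'" "w \<noteq> 0" shows "inverse w \<in> S"
proof (cases "w \<in> ball 0 r0")
  case True
  then have "norm w < r0" by simp
  have nw: "norm w > 0" using assms(2) by simp
  have "norm w * (Rb + 1) < 1" using \<open>norm w < r0\<close> Rb(1) by (simp add: r0_def field_simps)
  then have "Rb + 1 < 1 / norm w" using nw by (simp add: field_simps)
  then have "norm (inverse w) > Rb + 1" by (simp add: norm_inverse divide_inverse)
  then have "inverse w \<notin> cX" using Rb(2) by force
  then show ?thesis by (simp add: S_def)
next
  case False then show ?thesis using assms by (auto simp: S'_def)
qed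

lemma S_S': "u \<in> S \<Longrightarrow> inverse u \<in> S'"
  using r0_pos by (cases "u = 0") (auto simp: S'_def)

lemma zero_S': "0 \<in> S'" using r0_pos by (simp add: S'_def)

lemma ball_S': "ball 0 r0 \<subseteq> S'" by (simp add: S'_def)

lemma S'_open: "open S'"
proof -
  have "{w. w \<noteq> 0 \<and> inverse w \<in> S} = (- {0}) \<inter> inverse -` S" by auto
  moreover have "open ((- {0}) \<inter> inverse -` S)"
    by (rule continuous_open_preimage) (auto intro!: continuous_intros S_open)
  ultimately show ?thesis unfolding S'_def by auto
qed

lemma S'_star: assumes "w \<in> S'" "x \<in> closed_segment 0 w" shows "x \<in> S'"
proof -
  obtain t where t: "0 \<le> t" "t \<le> 1" "x = t *\<^sub>R w" using assms(2) unfolding in_segment by auto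
  show ?thesis
  proof (cases "x = 0")
    case True then show ?thesis by (simp add: zero_S')
  next
    case False
    then have t0: "t > 0" "w \<noteq> 0" using t by auto
    show ?thesis
    proof (cases "w \<in> ball 0 r0")
      case True
      then have "norm x \<le> norm w" using t by (simp add: mult_left_le_one_le)
      then show ?thesis using True ball_S' by auto
    next
      case False
      then have iw: "inverse w \<in> S" using assms(1) by (auto simp: S'_def)
      have "inverse x = of_real (1 / t) * inverse w"
        using t(3) t0 by (simp add: scaleR_conv_of_real divide_inverse mult.commute)
      moreover have "1 / t \<ge> 1" using t t0 by simp
      ultimately have "inverse x \<in> S" using S_ray[OF iw, of "1 / t"] by (simp only:)
      then show ?thesis using \<open>x \<noteq> 0\<close> by (simp add: S'_def)
    qed
  qed
qed

definition h :: "complex \<Rightarrow> 'n cm" where "h w = (if w = 0 then 1 else abs (\<xi> (inverse w)))"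

lemma rep_h: "rep (h w) = (if w = 0 then mat 1 else \<xi> (inverse w))"
  by (simp add: h_def one_cm.rep_eq abs_inverse)

lemma h_holo: "mholo h S'"
  unfolding mholo_def
proof (intro allI)
  fix i j
  have hol1: "(\<lambda>w. rep (h w) $ i $ j) holomorphic_on (S' - {0})"
  proof (rule holomorphic_transform)
    have "((\<lambda>u. \<xi> u $ i $ j) \<circ> inverse) holomorphic_on (S' - {0})"
      by (rule holomorphic_on_compose_gen[OF _ holomorphic_on_subset[OF xi_holo S_N]])
         (auto intro!: holomorphic_intros S'_inv)
    then show "(\<lambda>w. \<xi> (inverse w) $ i $ j) holomorphic_on (S' - {0})" by (simp add: o_def)
    show "\<And>w. w \<in> S' - {0} \<Longrightarrow> \<xi> (inverse w) $ i $ j = rep (h w) $ i $ j"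
      by (simp add: rep_h)
  qed
  have lim: "((\<lambda>w. \<xi> (inverse w)) \<longlongrightarrow> mat 1) (at 0)"
    by (rule filterlim_compose[OF at_inf filterlim_inverse_at_infinity])
  have l1: "((\<lambda>w. \<xi> (inverse w) $ i $ j) \<longlongrightarrow> rep (h 0) $ i $ j) (at 0)"
    unfolding rep_h by (simp add: tendsto_vec_nth lim)
  have ev: "eventually (\<lambda>w. \<xi> (inverse w) $ i $ j = rep (h w) $ i $ j) (at 0)"
    by (simp add: eventually_at_filter rep_h)
  have "((\<lambda>w. rep (h w) $ i $ j) \<longlongrightarrow> rep (h 0) $ i $ j) (at 0)"
    by (rule Lim_transform_eventually[OF l1 ev])
  then have c: "((\<lambda>w. rep (h w) $ i $ j) \<longlongrightarrow> rep (h 0) $ i $ j) (at 0 within S')"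
    using tendsto_within_subset[OF _ subset_UNIV] by blast
  show "(\<lambda>w. rep (h w) $ i $ j) holomorphic_on S'"
    by (rule no_isolated_singularity'[OF _ hol1 S'_open]) (use c in auto)
qed

lemma h_det: assumes "w \<in> S'" shows "det (rep (h w)) \<noteq> 0"
proof (cases "w = 0")
  case True then show ?thesis by (simp add: rep_h)
next
  case False
  then have "det (\<xi> (inverse w)) \<noteq> 0" using S_det S'_inv assms by blast
  then show ?thesis using False by (simp add: rep_h)
qed

lemma h0: "h 0 = 1" by (simp add: h_def)

end

locale ratfun_comm = ratfun +
  assumes comm: "\<And>u v. \<not> is_pole \<xi> u \<Longrightarrow> \<not> is_pole \<xi> v \<Longrightarrow> \<xi> u ** \<xi> v = \<xi> v ** \<xi> u"
begin

lemma h_comm: "v \<in> S' \<Longrightarrow> w \<in> S' \<Longrightarrow> h v * h w = h w * h v"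
  by (simp add: rep_inject[symmetric] times_cm.rep_eq rep_h comm S_nopole S'_inv)

sublocale L: logsetting S' h
proof
  show "open S'" by (rule S'_open)
  show "\<And>x. x \<in> S' \<Longrightarrow> closed_segment 0 x \<subseteq> S'" using S'_star by blast
  show "0 \<in> S'" by (rule zero_S')
  show "mholo h S'" by (rule h_holo)
  show "\<And>w. w \<in> S' \<Longrightarrow> det (rep (h w)) \<noteq> 0" by (rule h_det)
  show "h 0 = 1" by (rule h0)
  show "\<And>v w. v \<in> S' \<Longrightarrow> w \<in> S' \<Longrightarrow> h v * h w = h w * h v" by (rule h_comm)
qed

end



context ratfun_comm
begin

definition t where "t u = rep (L.T (inverse u))"

lemma S_inv_S': "u \<in> S \<Longrightarrow> inverse u \<in> S'" by (rule S_S')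

lemma zero_case:
  assumes "0 \<in> S"
  shows "pole_set \<xi> = {}" "\<And>u. \<xi> u = mat 1" "S = UNIV" "\<And>w. w \<in> S' \<Longrightarrow> L.T w = 0"
    "\<And>u. t u = 0"
proof -
  show pe: "pole_set \<xi> = {}"
  proof (rule ccontr)
    assume "pole_set \<xi> \<noteq> {}"
    then obtain a where "a \<in> pole_set \<xi>" by blast
    then have "0 \<in> cX" unfolding cX_def cutX_def by blast
    then show False using assms by (simp add: S_def)
  qed
  show xi1: "\<And>u. \<xi> u = mat 1" by (rule no_poles_const[OF pe])
  show SU: "S = UNIV" by (simp add: S_def cX_def cutX_def pe)
  have h1: "h w = 1" for w by (simp add: h_def xi1 one_cm_def)
  have hd: "cmderiv h w = 0" for w
  proof -
    have "(\<chi> i j. deriv (\<lambda>v. rep (h v) $ i $ j) w) = 0"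
      by (simp add: h1 vec_eq_iff)
    then show ?thesis by (simp add: cmderiv_def zero_cm_def)
  qed
  have "L.g w = 0" for w by (simp add: L.g_def hd)
  then have "\<And>w. w \<in> S' \<Longrightarrow> cd L.T 0 w" using L.T_cd by metis
  then show T0: "\<And>w. w \<in> S' \<Longrightarrow> L.T w = 0"
    using cd_zero_const[OF S'_open L.S_conn _ _ zero_S'] L.T0 by metis
  show "\<And>u. t u = 0" unfolding t_def using T0 S_inv_S' SU by (simp add: zero_cm.rep_eq)
qed

lemma t_holo: "mholo_on t S"
  unfolding mholo_on_def
proof (intro allI)
  fix i j
  show "(\<lambda>u. t u $ i $ j) holomorphic_on S"
  proof (cases "0 \<in> S")
    case True then show ?thesis by (simp add: zero_case(5))
  next
    case False
    have "((\<lambda>w. rep (L.T w) $ i $ j) \<circ> inverse) holomorphic_on S"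
      by (rule holomorphic_on_compose_gen[of inverse S "\<lambda>w. rep (L.T w) $ i $ j" S'])
         (use L.T_holo False in \<open>auto simp: mholo_def intro!: holomorphic_intros S_inv_S'\<close>)
    then show ?thesis by (simp add: t_def o_def)
  qed
qed

lemma t_inf: "holo_at_inf_zero t"
  unfolding holo_at_inf_zero_def mholo_on_def
proof (intro exI[of _ r0] conjI allI r0_pos)
  fix i j
  have "(\<lambda>w. rep (L.T w) $ i $ j) holomorphic_on ball 0 r0"
    using L.T_holo ball_S' holomorphic_on_subset unfolding mholo_def by blast
  then show "(\<lambda>w. (if w = 0 then 0 else t (inverse w)) $ i $ j) holomorphic_on ball 0 r0"
    by (rule holomorphic_transform) (auto simp: t_def L.T0 zero_cm.rep_eq)
qed

lemma t_exp: assumes "u \<in> S" shows "mexp (t u) = \<xi> u"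
proof -
  have "mexp (t u) = rep (exp (L.T (inverse u)))" by (simp add: t_def mexp_rep')
  also have "\<dots> = rep (h (inverse u))" using L.exp_T[OF S_inv_S'[OF assms]] by simp
  also have "\<dots> = \<xi> u"
  proof (cases "u = 0")
    case True then show ?thesis using zero_case(2) assms by (simp add: rep_h)
  next
    case False then show ?thesis by (simp add: rep_h)
  qed
  finally show ?thesis .
qed

lemma t_comm: "u \<in> S \<Longrightarrow> v \<in> S \<Longrightarrow> t u ** t v = t v ** t u"
  unfolding t_def times_cm.rep_eq[symmetric] using L.comm_TT S_inv_S' by metis

lemma t_deriv: assumes "u \<in> S" shows "mderiv t u = matrix_inv (\<xi> u) ** mderiv \<xi> u"
proof (cases "u = 0")
  case True
  then have z: "0 \<in> S" using assms by simp
  have "mderiv t u = 0" by (simp add: mderiv_def zero_case(5)[OF z] vec_eq_iff)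
  moreover have "mderiv \<xi> u = 0" by (simp add: mderiv_def zero_case(2)[OF z] vec_eq_iff)
  ultimately show ?thesis by simp
next
  case False
  define w where "w = inverse u"
  have w: "w \<in> S'" "w \<noteq> 0" "inverse w = u" using S_inv_S'[OF assms] False by (auto simp: w_def)
  have uN: "u \<in> N" using assms S_N by blast
  have dT: "((\<lambda>v. t v $ i $ j) has_field_derivative rep (L.g w) $ i $ j * (- (inverse u ^ Suc (Suc 0)))) (at u)" for i j
  proof -
    have "((\<lambda>v. rep (L.T v) $ i $ j) has_field_derivative rep (L.g w) $ i $ j) (at (inverse u))"
      using L.T_cd[OF w(1)] unfolding cd_iff w_def by blast
    from DERIV_chain2[OF this DERIV_inverse[OF False]] show ?thesis by (simp add: t_def)
  qed
  have dh: "rep (cmderiv h w) $ k $ j = mderiv \<xi> u $ k $ j * (- (inverse w ^ Suc (Suc 0)))" for k j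
  proof -
    have "((\<lambda>v. \<xi> v $ k $ j) has_field_derivative deriv (\<lambda>v. \<xi> v $ k $ j) u) (at u)"
      by (rule holomorphic_derivI[OF xi_holo N_open uN])
    then have "((\<lambda>v. \<xi> v $ k $ j) has_field_derivative mderiv \<xi> u $ k $ j) (at (inverse w))"
      by (simp add: mderiv_def w(3))
    from DERIV_chain2[OF this DERIV_inverse[OF w(2)]]
    have "((\<lambda>v. \<xi> (inverse v) $ k $ j) has_field_derivative mderiv \<xi> u $ k $ j * (- (inverse w ^ Suc (Suc 0)))) (at w)" .
    then have "((\<lambda>v. rep (h v) $ k $ j) has_field_derivative mderiv \<xi> u $ k $ j * (- (inverse w ^ Suc (Suc 0)))) (at w)"
      by (rule has_field_derivative_transform_within_open[of _ _ _ "- {0}"]) (auto simp: w(2) rep_h)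
    then show ?thesis by (simp add: cmderiv_def abs_inverse DERIV_imp_deriv)
  qed
  have rg: "rep (L.g w) $ i $ j = (\<Sum>k\<in>UNIV. matrix_inv (\<xi> u) $ i $ k * (mderiv \<xi> u $ k $ j * (- (inverse w ^ Suc (Suc 0)))))" for i j
    by (simp add: L.g_def rep_times_entry cminv_def abs_inverse rep_h w dh)
  have "mderiv t u $ i $ j = (matrix_inv (\<xi> u) ** mderiv \<xi> u) $ i $ j" for i j
  proof -
    have "mderiv t u $ i $ j = rep (L.g w) $ i $ j * (- (inverse u ^ Suc (Suc 0)))"
      using dT by (simp add: mderiv_def DERIV_imp_deriv)
    also have "\<dots> = (\<Sum>k\<in>UNIV. matrix_inv (\<xi> u) $ i $ k * mderiv \<xi> u $ k $ j)"
      unfolding rg sum_distrib_right using w False by (intro sum.cong refl) (simp add: w_def field_simps)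
    finally show ?thesis by (simp add: matrix_matrix_mult_def)
  qed
  then show ?thesis by (simp add: vec_eq_iff)
qed

end



context ratfun_comm
begin

lemma t_unique:
  assumes hol: "mholo_on t' S" and inf: "holo_at_inf_zero t'" and ex: "\<And>u. u \<in> S \<Longrightarrow> mexp (t' u) = \<xi> u"
  shows "u \<in> S \<Longrightarrow> t' u = t u"
proof -
  obtain r where r: "r > 0" "mholo_on (\<lambda>w. if w = 0 then 0 else t' (inverse w)) (ball 0 r)"
    using inf unfolding holo_at_inf_zero_def by blast
  define T2 where "T2 = (\<lambda>w. abs (if w = 0 then 0 else t' (inverse w)))"
  have rT2: "rep (T2 w) = (if w = 0 then 0 else t' (inverse w))" for w
    by (simp add: T2_def abs_inverse)
  have T2_holo: "mholo T2 S'"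
    unfolding mholo_def
  proof (intro allI)
    fix i j
    show "(\<lambda>w. rep (T2 w) $ i $ j) holomorphic_on S'"
      unfolding holomorphic_on_open[OF S'_open]
    proof
      fix x assume x: "x \<in> S'"
      show "\<exists>f'. ((\<lambda>w. rep (T2 w) $ i $ j) has_field_derivative f') (at x)"
      proof (cases "x = 0")
        case True
        have "(\<lambda>w. rep (T2 w) $ i $ j) holomorphic_on ball 0 r"
          using r(2) unfolding mholo_on_def rT2 by blast
        moreover have "x \<in> ball 0 r" using True r(1) by simp
        ultimately show ?thesis using holomorphic_derivI[OF _ open_ball] by blast
      next
        case False
        have O: "open (S' - {0})" using S'_open by auto
        have "((\<lambda>u. t' u $ i $ j) \<circ> inverse) holomorphic_on (S' - {0})"
          by (rule holomorphic_on_compose_gen[of inverse "S' - {0}" "\<lambda>u. t' u $ i $ j" S])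
             (use hol in \<open>auto simp: mholo_on_def intro!: holomorphic_intros S'_inv\<close>)
        then have "(\<lambda>w. rep (T2 w) $ i $ j) holomorphic_on (S' - {0})"
          by (rule holomorphic_transform) (simp add: rT2)
        moreover have "x \<in> S' - {0}" using x False by simp
        ultimately show ?thesis using holomorphic_derivI[OF _ O] by blast
      qed
    qed
  qed
  have T2_exp: "exp (T2 w) = h w" if "w \<in> S'" for w
  proof (cases "w = 0")
    case True then show ?thesis by (simp add: T2_def zero_cm_def[symmetric] h0)
  next
    case False
    have "rep (exp (T2 w)) = mexp (t' (inverse w))" by (simp add: mexp_rep'[symmetric] rT2 False)
    also have "\<dots> = \<xi> (inverse w)" using ex S'_inv[OF that False] by simp
    also have "\<dots> = rep (h w)" by (simp add: rep_h False)
    finally show ?thesis by (simp add: rep_inject)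
  qed
  have T20: "T2 0 = 0" by (simp add: T2_def zero_cm_def)
  have cT: "isCont L.T 0" using cd_cont[OF mholo_cd[OF L.T_holo S'_open zero_S']] .
  have cT2: "isCont T2 0" using cd_cont[OF mholo_cd[OF T2_holo S'_open zero_S']] .
  obtain d1 where d1: "d1 > 0" "\<And>x. x \<noteq> 0 \<and> dist x 0 < d1 \<Longrightarrow> dist (L.T x) 0 < 1/2"
    using metric_LIM_D[of L.T 0 0 "1/2"] cT L.T0 unfolding isCont_def by auto
  obtain d2 where d2: "d2 > 0" "\<And>x. x \<noteq> 0 \<and> dist x 0 < d2 \<Longrightarrow> dist (T2 x) 0 < 1/2"
    using metric_LIM_D[of T2 0 0 "1/2"] cT2 T20 unfolding isCont_def by auto
  define d where "d = min (min d1 d2) r0"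
  have d: "d > 0" using d1 d2 r0_pos by (simp add: d_def)
  have eq_ball: "L.T w = T2 w" if "w \<in> ball 0 d" for w
  proof (cases "w = 0")
    case True then show ?thesis by (simp add: L.T0 T20)
  next
    case False
    have wS: "w \<in> S'" using that ball_S' by (auto simp: d_def)
    have "norm (L.T w) \<le> 1/2" using d1(2)[of w] that False by (auto simp: d_def dist_norm)
    moreover have "norm (T2 w) \<le> 1/2" using d2(2)[of w] that False by (auto simp: d_def dist_norm)
    moreover have "exp (L.T w) = exp (T2 w)" using L.exp_T[OF wS] T2_exp[OF wS] by simp
    ultimately show ?thesis by (rule exp_inj_small)
  qed
  have eqS': "L.T w = T2 w" if "w \<in> S'" for w
  proof -
    have "rep (L.T w) $ i $ j = rep (T2 w) $ i $ j" for i j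
    proof (rule analytic_continuation_open[of "ball 0 d" S' "\<lambda>w. rep (L.T w) $ i $ j" "\<lambda>w. rep (T2 w) $ i $ j" w])
      show "ball 0 d \<subseteq> S'" using ball_S' by (auto simp: d_def)
      show "(\<lambda>w. rep (L.T w) $ i $ j) holomorphic_on S'" using L.T_holo by (simp add: mholo_def)
      show "(\<lambda>w. rep (T2 w) $ i $ j) holomorphic_on S'" using T2_holo by (simp add: mholo_def)
      show "\<And>z. z \<in> ball 0 d \<Longrightarrow> rep (L.T z) $ i $ j = rep (T2 z) $ i $ j" using eq_ball by simp
    qed (use d S'_open L.S_conn that in auto)
    then show ?thesis by (simp add: rep_inject[symmetric] vec_eq_iff)
  qed
  assume uS: "u \<in> S"
  show "t' u = t u"
  proof (cases "u = 0")
    case False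
    have "t' u = rep (T2 (inverse u))" using False by (simp add: rT2)
    also have "\<dots> = rep (L.T (inverse u))" using eqS'[OF S_inv_S'[OF uS]] by simp
    finally show ?thesis by (simp add: t_def)
  next
    case True
    then have z: "0 \<in> S" using uS by simp
    have t0: "\<And>v. t v = 0" by (rule zero_case(5)[OF z])
    have "t' 0 $ i $ j = 0" for i j
    proof -
      have "continuous_on S (\<lambda>v. t' v $ i $ j)"
        using hol unfolding mholo_on_def by (blast intro: holomorphic_on_imp_continuous_on)
      then have "isCont (\<lambda>v. t' v $ i $ j) 0" using continuous_on_eq_continuous_at[OF S_open] z by blast
      then have l1: "((\<lambda>v. t' v $ i $ j) \<longlongrightarrow> t' 0 $ i $ j) (at 0)" by (simp add: isCont_def)
      have ev: "eventually (\<lambda>v. t' v $ i $ j = 0) (at 0)"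
      proof -
        have "t' v = t v" if "v \<noteq> 0" for v
        proof -
          have "v \<in> S" using zero_case(3)[OF z] by simp
          have "t' v = rep (T2 (inverse v))" using that by (simp add: rT2)
          also have "\<dots> = rep (L.T (inverse v))" using eqS'[OF S_inv_S'[OF \<open>v \<in> S\<close>]] by simp
          finally show ?thesis by (simp add: t_def)
        qed
        then show ?thesis by (simp add: eventually_at_filter t0)
      qed
      have l2: "((\<lambda>v. t' v $ i $ j) \<longlongrightarrow> 0) (at 0)" by (rule tendsto_eventually[OF ev])
      show ?thesis using tendsto_unique[OF at_neq_bot l1 l2] .
    qed
    then show ?thesis using True t0 by (simp add: vec_eq_iff)
  qed
qed

end


theorem proposition5p4:
  fixes \<xi> :: "complex \<Rightarrow> complex^'n^'n"
  assumes rat: "rational_mfun \<xi>"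
    and at_inf: "(\<xi> \<longlongrightarrow> mat 1) at_infinity"
    and comm: "\<And>u v. \<not> is_pole \<xi> u \<Longrightarrow> \<not> is_pole \<xi> v \<Longrightarrow> \<xi> u ** \<xi> v = \<xi> v ** \<xi> u"
  shows "\<exists>t. (mholo_on t (- cutX \<xi>) \<and> holo_at_inf_zero t \<and>
               (\<forall>u\<in>- cutX \<xi>. mexp (t u) = \<xi> u)) \<and>
             (\<forall>t'. mholo_on t' (- cutX \<xi>) \<and> holo_at_inf_zero t' \<and>
                   (\<forall>u\<in>- cutX \<xi>. mexp (t' u) = \<xi> u)
                   \<longrightarrow> (\<forall>u\<in>- cutX \<xi>. t' u = t u)) \<and>
             (\<forall>u\<in>- cutX \<xi>. \<forall>v\<in>- cutX \<xi>. t u ** t v = t v ** t u) \<and>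
             (\<forall>u\<in>- cutX \<xi>. mderiv t u = matrix_inv (\<xi> u) ** mderiv \<xi> u)"
proof -
  obtain P q where Pq: "q \<noteq> 0" "\<And>u. poly q u \<noteq> 0 \<Longrightarrow> \<xi> u = (\<chi> i j. poly (P$i$j) u / poly q u)"
    and c: "\<And>u. \<not> is_pole \<xi> u \<Longrightarrow> isCont \<xi> u"
    using rat unfolding rational_mfun_def by blast
  interpret R: ratfun_comm \<xi> P q
    by unfold_locales (use Pq c at_inf comm in auto)
  have S: "- cutX \<xi> = R.S" by (simp add: R.S_def R.cX_def)
  have u: "\<forall>t'. mholo_on t' R.S \<and> holo_at_inf_zero t' \<and> (\<forall>u\<in>R.S. mexp (t' u) = \<xi> u)
                   \<longrightarrow> (\<forall>u\<in>R.S. t' u = R.t u)"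
    using R.t_unique by blast
  show ?thesis unfolding S
    using R.t_holo R.t_inf R.t_exp R.t_comm R.t_deriv u by blast
qed

end
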